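(* Let $n\ge3$, $f=\frac1nx^n+xy^2$, $G=\mathbb{Z}/2n\mathbb{Z}=\langle\Lambda\rangle$ with $\rho(\Lambda)=\mathrm{diag}(\zeta_{2n}^2,\zeta_{2n}^{-1})$, $\zeta_{2n}=e^{2\pi i/2n}$, $\sigma\equiv0$, and $j=\Lambda^{n+1}$ (so $\rho(j)=\mathrm{diag}(e^{2\pi i/n},e^{2\pi i(n-1)/2n})$). Then the $\check\varphi$-invariant subspace of $\check{GM_f}$ is spanned by $$\check1_{\Lambda^{-k}}\ (k\in\{0,1,\dots,2n-2\}\setminus\{n-1\}),\qquad y\,\check1_{\Lambda^{-(n-1)}},$$ where $\check 1_{\Lambda^{-k}}$ has dual bi-degree $(-\frac{k}{2n},\frac{k}{2n})$ and $y\check1_{\Lambda^{-(n-1)}}$ has dual bi-degree $(-\frac{n-1}{2n},\frac{n-1}{2n})$. Thus the invariants have dimension $2n-1$ and their bi-degrees are exactly $(-\frac{k}{2n},\frac{k}{2n})$, $k=0,\dots,2n-2$, each occurring once, i.e. the spectrum of the $(a,c)$ realization of the $A_{2n-1}$ Milnor ring $\mathbb{C}[z]/(z^{2n-1})$ with $\deg z=\frac1{2n}$.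
   Context: Standing setup. For quasi-homogeneous $f$ with weights $q_i\in(0,1)$, $d=\sum_i(1-2q_i)$, a finite abelian group $G$ acting diagonally via $\rho$ leaving $f$ invariant, $\rho(g)=\mathrm{diag}(e^{2\pi i\nu_i(g)})$, $\nu_i(g)\in[0,1)$: $\mathrm{Fix}(g)$ is spanned by the coordinates with $\nu_i(g)=0$, $A_g=M_{f|_{\mathrm{Fix}(g)}}$ ($=\mathbb{C}$ if $\mathrm{Fix}(g)=0$) with elements $a1_g$; for $\sigma\in\mathrm{Hom}(G,\mathbb{Z}/2\mathbb{Z})$, $\varphi(h)(a1_g)=(-1)^{\sigma(h)\sigma(g)}\det(\rho(h))^{-1}\det(\rho(h)|_{\mathrm{Fix}(g)})\,a(\rho(h)z)\,1_g$, and $\chi(h)=(-1)^{\sigma(h)}\det\rho(h)$. Let $j\in G$ satisfy $\rho(j)=\mathrm{diag}(e^{2\pi iq_i})$. Dual: $\check A_g:=A_{gj^{-1}}$; $a\check1_g$ denotes $a1_{gj^{-1}}$ viewed in $\check A_g$; $\check\varphi(h)(a\check1_g)=\chi(h)\varphi(h)(a1_{gj^{-1}})$ viewed in $\check A_g$. Shifts $s_g=\sum_{i:\nu_i(g)\ne0}(\nu_i(g)-q_i)$, $\bar s_g=\sum_{i:\nu_i(g)\ne0}(1-\nu_i(g)-q_i)$; dual bi-degree of $a\check1_g$ is $(\deg a+s_{gj^{-1}}-d,\ \deg a+\bar s_{gj^{-1}})$. For $D_{n+1}$: $q_x=\frac1n$, $q_y=\frac{n-1}{2n}$, $d=\frac{n-1}n$,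 $M_f$ has basis $1,x,\dots,x^{n-1},y$. *)

theory Defs
  imports Complex_Main
begin

text \<open>A group element Lambda^m is represented by the residue m mod 2n (a nat < 2n).
  A monomial x^a y^b is represented by the exponent pair (a,b).\<close>

definition zeta :: "nat \<Rightarrow> complex" where
  "zeta n = cis (2 * pi / real (2 * n))"

definition lam_pow :: "nat \<Rightarrow> int \<Rightarrow> nat" where
  "lam_pow n k = nat (k mod int (2 * n))"

definition rho_x :: "nat \<Rightarrow> nat \<Rightarrow> complex" where
  "rho_x n m = zeta n ^ (2 * m)"
definition rho_y :: "nat \<Rightarrow> nat \<Rightarrow> complex" where
  "rho_y n m = inverse (zeta n) ^ m"

text \<open>nu_i(g) in [0,1) with rho_i(g) = exp(2 pi i nu_i(g)).\<close>
definition nu_x :: "nat \<Rightarrow> nat \<Rightarrow> real" where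
  "nu_x n m = frac (real (2 * m) / real (2 * n))"
definition nu_y :: "nat \<Rightarrow> nat \<Rightarrow> real" where
  "nu_y n m = frac (- real m / real (2 * n))"

text \<open>Weights of f = x^n/n + x y^2 and central charge d.\<close>
definition q_x :: "nat \<Rightarrow> real" where "q_x n = 1 / real n"
definition q_y :: "nat \<Rightarrow> real" where "q_y n = (real n - 1) / (2 * real n)"
definition cc :: "nat \<Rightarrow> real" where "cc n = (1 - 2 * q_x n) + (1 - 2 * q_y n)"

text \<open>Monomial basis of A_g = M_{f|Fix(g)}:
  Fix(g) = C^2: M_f has basis 1, x, ..., x^(n-1), y;
  Fix(g) = x-axis: f| = x^n/n, Milnor ring C[x]/(x^(n-1)) with basis 1,...,x^(n-2);
  Fix(g) = 0: A_g = C, basis 1;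
  Fix(g) = y-axis never occurs for this group (left empty).\<close>
definition mbasis :: "nat \<Rightarrow> nat \<Rightarrow> (nat \<times> nat) set" where
  "mbasis n g =
    (if nu_x n g = 0 \<and> nu_y n g = 0 then {(a, 0) | a. a < n} \<union> {(0, 1)}
     else if nu_x n g = 0 then {(a, 0) | a. a < n - 1}
     else if nu_y n g = 0 then {}
     else {(0, 0)})"

definition mdeg :: "nat \<Rightarrow> nat \<times> nat \<Rightarrow> real" where
  "mdeg n mo = real (fst mo) * q_x n + real (snd mo) * q_y n"

definition shift :: "nat \<Rightarrow> nat \<Rightarrow> real" where
  "shift n g = (if nu_x n g \<noteq> 0 then nu_x n g - q_x n else 0)
             + (if nu_y n g \<noteq> 0 then nu_y n g - q_y n else 0)"
definition shiftbar :: "nat \<Rightarrow> nat \<Rightarrow> real" where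
  "shiftbar n g = (if nu_x n g \<noteq> 0 then 1 - nu_x n g - q_x n else 0)
                + (if nu_y n g \<noteq> 0 then 1 - nu_y n g - q_y n else 0)"

definition jel :: "nat \<Rightarrow> nat" where "jel n = lam_pow n (int n + 1)"
definition gjinv :: "nat \<Rightarrow> nat \<Rightarrow> nat" where
  "gjinv n g = lam_pow n (int g - (int n + 1))"

text \<open>The dual state space: families of coefficients v g mo of the basis elements
  mo check-1_g, where mo ranges over the monomial basis of check-A_g = A_{g j^{-1}}.\<close>
definition chk_space :: "nat \<Rightarrow> (nat \<Rightarrow> nat \<times> nat \<Rightarrow> complex) set" where
  "chk_space n = {v. \<forall>g mo. v g mo \<noteq> 0 \<longrightarrow> g < 2 * n \<and> mo \<in> mbasis n (gjinv n g)}"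

definition sigma :: "nat \<Rightarrow> nat \<Rightarrow> nat" where "sigma n h = 0"

definition det_rho :: "nat \<Rightarrow> nat \<Rightarrow> complex" where
  "det_rho n h = rho_x n h * rho_y n h"
definition det_fix :: "nat \<Rightarrow> nat \<Rightarrow> nat \<Rightarrow> complex" where
  "det_fix n h g = (if nu_x n g = 0 then rho_x n h else 1) * (if nu_y n g = 0 then rho_y n h else 1)"

text \<open>phi(h)(x^a y^b 1_g) = coefficient * x^a y^b 1_g.\<close>
definition phi_coef :: "nat \<Rightarrow> nat \<Rightarrow> nat \<Rightarrow> nat \<times> nat \<Rightarrow> complex" where
  "phi_coef n h g mo = (-1) ^ (sigma n h * sigma n g) * inverse (det_rho n h) * det_fix n h g
                       * rho_x n h ^ fst mo * rho_y n h ^ snd mo"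

definition chi :: "nat \<Rightarrow> nat \<Rightarrow> complex" where
  "chi n h = (-1) ^ sigma n h * det_rho n h"

text \<open>check-phi(h)(a check-1_g) = chi(h) phi(h)(a 1_{g j^{-1}}), extended linearly.\<close>
definition check_act :: "nat \<Rightarrow> nat \<Rightarrow> (nat \<Rightarrow> nat \<times> nat \<Rightarrow> complex) \<Rightarrow> (nat \<Rightarrow> nat \<times> nat \<Rightarrow> complex)" where
  "check_act n h v = (\<lambda>g mo. chi n h * phi_coef n h (gjinv n g) mo * v g mo)"

definition invariants :: "nat \<Rightarrow> (nat \<Rightarrow> nat \<times> nat \<Rightarrow> complex) set" where
  "invariants n = {v \<in> chk_space n. \<forall>h < 2 * n. check_act n h v = v}"

definition bvec :: "nat \<Rightarrow> nat \<times> nat \<Rightarrow> (nat \<Rightarrow> nat \<times> nat \<Rightarrow> complex)" where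
  "bvec g mo = (\<lambda>g' mo'. if g' = g \<and> mo' = mo then 1 else 0)"

definition cspan_idx :: "(nat \<times> (nat \<times> nat)) set \<Rightarrow> (nat \<Rightarrow> nat \<times> nat \<Rightarrow> complex) set" where
  "cspan_idx I = {v. \<exists>c. v = (\<lambda>g mo. \<Sum>i\<in>I. c i * bvec (fst i) (snd i) g mo)}"
definition lin_indep_idx :: "(nat \<times> (nat \<times> nat)) set \<Rightarrow> bool" where
  "lin_indep_idx I = (\<forall>c. (\<lambda>g mo. \<Sum>i\<in>I. c i * bvec (fst i) (snd i) g mo) = (\<lambda>_ _. 0)
                         \<longrightarrow> (\<forall>i\<in>I. c i = 0))"

definition dual_bideg :: "nat \<Rightarrow> nat \<times> (nat \<times> nat) \<Rightarrow> real \<times> real" where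
  "dual_bideg n i = (mdeg n (snd i) + shift n (gjinv n (fst i)) - cc n,
                     mdeg n (snd i) + shiftbar n (gjinv n (fst i)))"

end

theory Submission
  imports Defs
begin

lemma mod_char: fixes x r q N :: int assumes "0 \<le> r" "r < N" "x = r + q * N" shows "x mod N = r"
  using assms by (simp add: mod_pos_pos_trivial)

lemma lam_pow_k: assumes "k < 2*n" shows "lam_pow n (- int k) = (if k = 0 then 0 else 2*n - k)"
proof (cases "k = 0")
  case False
  have "(- int k) mod int (2*n) = int (2*n) - int k"
    using assms False by (intro mod_char[where q="-1"]) auto
  then show ?thesis using False assms by (simp add: lam_pow_def)
qed (simp add: lam_pow_def)

lemma lam_pow_n1: assumes "n \<ge> 3" shows "lam_pow n (- (int n - 1)) = n + 1"
proof -
  have "(- (int n - 1)) mod int (2*n) = int n + 1"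
    using assms by (intro mod_char[where q="-1"]) auto
  then show ?thesis by (simp add: lam_pow_def)
qed

lemma gjinv_eq: assumes "g < 2*n" "n \<ge> 1" shows "gjinv n g = (if n+1 \<le> g then g-n-1 else g+n-1)"
proof (cases "n+1 \<le> g")
  case True
  have "(int g - (int n + 1)) mod int (2*n) = int g - int n - 1"
    using assms True by (intro mod_char[where q="0"]) auto
  then show ?thesis using True by (simp add: gjinv_def lam_pow_def)
next
  case False
  have "(int g - (int n + 1)) mod int (2*n) = int g + int n - 1"
    using assms False by (intro mod_char[where q="-1"]) auto
  then show ?thesis using False by (simp add: gjinv_def lam_pow_def)
qed

lemma nu_x_eq: assumes "m < 2*n" shows "nu_x n m = (if m < n then real m / real n else real m / real n - 1)"
proof -
  have e: "real (2*m) / real (2*n) = real m / real n" by simp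
  show ?thesis
  proof (cases "m < n")
    case True
    then have "frac (real m / real n) = real m / real n"
      by (subst frac_eq) (auto simp: divide_simps)
    then show ?thesis using True by (simp add: nu_x_def)
  next
    case False
    then have "n > 0" using assms by simp
    have "floor (real m / real n) = 1" using False assms \<open>n>0\<close>
      by (subst floor_eq_iff) (auto simp: divide_simps)
    then show ?thesis using False by (simp add: nu_x_def frac_def)
  qed
qed

lemma nu_y_eq: assumes "m < 2*n" shows "nu_y n m = (if m = 0 then 0 else 1 - real m / real (2*n))"
proof (cases "m = 0")
  case False
  have "floor (- real m / real (2*n)) = -1" using False assms
    by (subst floor_eq_iff) (auto simp: divide_simps)
  then show ?thesis using False by (simp add: nu_y_def frac_def)
qed (simp add: nu_y_def)

lemma nu_x_0: assumes "m < 2*n" shows "nu_x n m = 0 \<longleftrightarrow> m = 0 \<or> m = n"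
  using assms by (auto simp: nu_x_eq divide_simps split: if_splits)

lemma nu_y_0: assumes "m < 2*n" shows "nu_y n m = 0 \<longleftrightarrow> m = 0"
  using assms by (auto simp: nu_y_eq divide_simps split: if_splits)

lemma zeta_pow_ne1: assumes "0 < m" "m < 2*n" shows "zeta n ^ m \<noteq> 1"
proof
  assume h: "zeta n ^ m = 1"
  have "inj_on (\<lambda>k. cis (2 * pi * real k / real (2*n))) {..<2*n}"
    using bij_betw_roots_unity[of "2*n"] assms by (simp add: bij_betw_def)
  moreover have "cis (2 * pi * real m / real (2*n)) = cis (2 * pi * real (0::nat) / real (2*n))"
    using h by (simp add: zeta_def DeMoivre mult_ac)
  ultimately have "m = 0" using assms by (auto simp: inj_on_def)
  then show False using assms by simp
qed

lemma zeta_nz: "zeta n \<noteq> 0"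
  by (simp add: zeta_def)

definition Fc :: "nat \<Rightarrow> nat \<Rightarrow> nat \<Rightarrow> nat \<times> nat \<Rightarrow> complex" where
  "Fc n h g mo = det_fix n h g * rho_x n h ^ fst mo * rho_y n h ^ snd mo"

lemma check_act_eq: "check_act n h v = (\<lambda>g mo. Fc n h (gjinv n g) mo * v g mo)"
proof -
  have "det_rho n h \<noteq> 0" by (simp add: det_rho_def rho_x_def rho_y_def zeta_nz)
  then show ?thesis
    by (simp add: check_act_def chi_def phi_coef_def sigma_def Fc_def fun_eq_iff)
qed

definition Iset :: "nat \<Rightarrow> (nat \<times> (nat \<times> nat)) set" where
  "Iset n = ({g. g < 2*n \<and> g \<noteq> 1 \<and> g \<noteq> n+1} \<times> {(0,0)}) \<union> {(n+1,(0,1))}"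

lemma gjinv_lt: assumes "n > 0" shows "gjinv n g < 2*n"
proof -
  have "(int g - (int n + 1)) mod int (2*n) < int (2*n)" using assms by simp
  then show ?thesis using assms by (simp add: gjinv_def lam_pow_def nat_less_iff)
qed

lemma inv_char: assumes "n \<ge> 3"
  shows "v \<in> invariants n \<longleftrightarrow> (\<forall>g mo. v g mo \<noteq> 0 \<longrightarrow> (g,mo) \<in> Iset n)"
proof
  assume inv: "v \<in> invariants n"
  show "\<forall>g mo. v g mo \<noteq> 0 \<longrightarrow> (g,mo) \<in> Iset n"
  proof (intro allI impI)
    fix g mo assume nz: "v g mo \<noteq> 0"
    have chk: "\<forall>g mo. v g mo \<noteq> 0 \<longrightarrow> g < 2 * n \<and> mo \<in> mbasis n (gjinv n g)"
      using inv unfolding invariants_def chk_space_def by blast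
    from chk nz have g2: "g < 2*n" and mb: "mo \<in> mbasis n (gjinv n g)" by blast+
    have "check_act n 1 v g mo = v g mo" using inv assms by (auto simp: invariants_def)
    then have F1: "Fc n 1 (gjinv n g) mo = 1" using nz by (simp add: check_act_eq)
    have gj: "gjinv n g = (if n+1 \<le> g then g-n-1 else g+n-1)" using gjinv_eq[OF g2] assms by simp
    have gl: "gjinv n g < 2*n" using gjinv_lt assms by simp
    consider "gjinv n g = 0" | "gjinv n g = n" | "gjinv n g \<noteq> 0 \<and> gjinv n g \<noteq> n" by blast
    then show "(g,mo) \<in> Iset n"
    proof cases
      case 1
      then have gn: "g = n+1" using gj g2 assms by (auto split: if_splits)
      have "mbasis n 0 = {(a, 0) | a. a < n} \<union> {(0, 1)}"
        using nu_x_0[of 0 n] nu_y_0[of 0 n] assms by (simp add: mbasis_def)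
      with mb 1 obtain a where "mo = (0,1) \<or> (mo = (a,0) \<and> a < n)" by auto
      moreover
      {
        assume m: "mo = (a,0)" "a < n"
        have "Fc n 1 0 (a,0) = zeta n ^ (2*a+1)"
          using nu_x_0[of 0 n] nu_y_0[of 0 n] assms
          by (simp add: Fc_def det_fix_def rho_x_def rho_y_def power2_eq_square zeta_nz power_add power_mult)
        moreover have "zeta n ^ (2*a+1) \<noteq> 1" using m by (intro zeta_pow_ne1) auto
        ultimately have False using F1 1 m by simp
      }
      ultimately show ?thesis using gn by (auto simp: Iset_def)
    next
      case 2
      then have gn: "g = 1" using gj g2 assms by (auto split: if_splits)
      have "mbasis n n = {(a, 0) | a. a < n - 1}"
        using nu_x_0[of n n] nu_y_0[of n n] assms by (simp add: mbasis_def)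
      with mb 2 obtain a where m: "mo = (a,0)" "a < n - 1" by auto
      have "Fc n 1 n (a,0) = zeta n ^ (2*a+2)"
        using nu_x_0[of n n] nu_y_0[of n n] assms
        by (simp add: Fc_def det_fix_def rho_x_def rho_y_def power2_eq_square zeta_nz power_add power_mult)
      moreover have "zeta n ^ (2*a+2) \<noteq> 1" using m by (intro zeta_pow_ne1) auto
      ultimately have False using F1 2 m by simp
      then show ?thesis ..
    next
      case 3
      then have "mbasis n (gjinv n g) = {(0,0)}"
        using nu_x_0[OF gl] nu_y_0[OF gl] by (simp add: mbasis_def)
      moreover have "g \<noteq> 1" "g \<noteq> n+1" using 3 gj assms by auto
      ultimately show ?thesis using mb g2 by (auto simp: Iset_def)
    qed
  qed
next
  assume S: "\<forall>g mo. v g mo \<noteq> 0 \<longrightarrow> (g,mo) \<in> Iset n"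
  have key: "g < 2*n \<and> mo \<in> mbasis n (gjinv n g) \<and> (\<forall>h. Fc n h (gjinv n g) mo = 1)"
    if gm: "(g,mo) \<in> Iset n" for g mo
  proof -
    have "g < 2*n" using that assms by (auto simp: Iset_def)
    have gj: "gjinv n g = (if n+1 \<le> g then g-n-1 else g+n-1)" using gjinv_eq[OF \<open>g < 2*n\<close>] assms by simp
    have gl: "gjinv n g < 2*n" using gjinv_lt assms by simp
    consider "g = n+1" "mo = (0,1)" | "g < 2*n" "g \<noteq> 1" "g \<noteq> n+1" "mo = (0,0)"
      using gm by (auto simp: Iset_def)
    then show ?thesis
    proof cases
      case 1
      then have "gjinv n g = 0" using gj by simp
      moreover have "mbasis n 0 = {(a, 0) | a. a < n} \<union> {(0, 1)}"
        using nu_x_0[of 0 n] nu_y_0[of 0 n] assms by (simp add: mbasis_def)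
      moreover have "Fc n h 0 (0,1) = 1" for h
      proof -
        have "Fc n h 0 (0,1) = (zeta n * inverse (zeta n)) ^ (2*h)"
          using nu_x_0[of 0 n] nu_y_0[of 0 n] assms
          by (simp add: Fc_def det_fix_def rho_x_def rho_y_def power_mult_distrib power_mult mult_2 power_add)
        then show ?thesis by (simp add: zeta_nz)
      qed
      ultimately show ?thesis using 1 assms by simp
    next
      case 2
      then have "gjinv n g \<noteq> 0" "gjinv n g \<noteq> n" using gj assms by auto
      then have "mbasis n (gjinv n g) = {(0,0)}" "\<And>h. Fc n h (gjinv n g) (0,0) = 1"
        using nu_x_0[OF gl] nu_y_0[OF gl] by (simp_all add: mbasis_def Fc_def det_fix_def)
      then show ?thesis using 2 by simp
    qed
  qed
  have c1: "v \<in> chk_space n"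
    unfolding chk_space_def using S key by blast
  have c2: "check_act n h v = v" for h
    unfolding check_act_eq fun_eq_iff
  proof (intro allI)
    fix g mo show "Fc n h (gjinv n g) mo * v g mo = v g mo"
    proof (cases "v g mo = 0")
      case False
      then have "(g,mo) \<in> Iset n" using S by blast
      then show ?thesis using key[of g mo] by simp
    qed simp
  qed
  show "v \<in> invariants n" using c1 c2 by (simp add: invariants_def)
qed

lemma bideg_base: "dual_bideg n (g, (0,0)) = (shift n (gjinv n g) - cc n, shiftbar n (gjinv n g))"
  by (simp add: dual_bideg_def mdeg_def)

lemma bideg_k: assumes n3: "n \<ge> 3" and k: "k \<le> 2*n-2" "k \<noteq> n-1"
  shows "dual_bideg n (lam_pow n (- int k), (0, 0)) = (- real k / real (2 * n), real k / real (2 * n))"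
proof -
  define g where "g = lam_pow n (- int k)"
  have g: "g = (if k = 0 then 0 else 2*n - k)" using lam_pow_k[of k n] k n3 by (simp add: g_def)
  have "g < 2*n" using g n3 by auto
  define g' where "g' = gjinv n g"
  have g'eq: "g' = (if k \<le> n-2 then n-1-k else 3*n-1-k)"
    using gjinv_eq[OF \<open>g < 2*n\<close>] n3 k g unfolding g'_def by auto
  have g'l: "g' < 2*n" using g'eq n3 k by auto
  have nz: "g' \<noteq> 0" "g' \<noteq> n" using g'eq n3 k by auto
  have nx: "nu_x n g' \<noteq> 0" "nu_y n g' \<noteq> 0" using nu_x_0[OF g'l] nu_y_0[OF g'l] nz by auto
  have npos: "real n > 0" using n3 by simp
  have base: "dual_bideg n (lam_pow n (- int k), (0, 0)) =
     (nu_x n g' - q_x n + (nu_y n g' - q_y n) - cc n, 1 - nu_x n g' - q_x n + (1 - nu_y n g' - q_y n))"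
    unfolding bideg_base g_def[symmetric] g'_def[symmetric] using nx by (simp add: shift_def shiftbar_def)
  show ?thesis
  proof (cases "k \<le> n-2")
    case True
    then have e: "g' = n-1-k" using g'eq by simp
    then have r: "real g' = real n - 1 - real k" using True n3 by (simp add: of_nat_diff)
    have "g' < n" using e n3 by simp
    then have nxe: "nu_x n g' = (real n - 1 - real k) / real n" "nu_y n g' = 1 - (real n - 1 - real k) / real (2*n)"
      using nu_x_eq[OF g'l] nu_y_eq[OF g'l] nz r by auto
    show ?thesis unfolding base nxe
      using npos by (simp add: cc_def q_x_def q_y_def field_simps)
  next
    case False
    then have e: "g' = 3*n-1-k" using g'eq by simp
    then have r: "real g' = 3 * real n - 1 - real k" using k n3 by (simp add: of_nat_diff)
    have "\<not> g' < n" using e k by simp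
    then have nxe: "nu_x n g' = (3 * real n - 1 - real k) / real n - 1" "nu_y n g' = 1 - (3 * real n - 1 - real k) / real (2*n)"
      using nu_x_eq[OF g'l] nu_y_eq[OF g'l] nz r by auto
    show ?thesis unfolding base nxe
      using npos by (simp add: cc_def q_x_def q_y_def field_simps)
  qed
qed

lemma bideg_n1: assumes n3: "n \<ge> 3"
  shows "dual_bideg n (lam_pow n (- (int n - 1)), (0, 1)) = (- (real n - 1) / real (2 * n), (real n - 1) / real (2 * n))"
proof -
  have g: "gjinv n (lam_pow n (- (int n - 1))) = 0" using gjinv_eq[of "n+1" n] n3 lam_pow_n1[OF n3] by simp
  have "nu_x n 0 = 0" "nu_y n 0 = 0" using nu_x_0[of 0 n] nu_y_0[of 0 n] n3 by auto
  moreover have "real n > 0" using n3 by simp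
  ultimately show ?thesis using g
    by (simp add: dual_bideg_def shift_def shiftbar_def mdeg_def cc_def q_x_def q_y_def field_simps)
qed

lemma sum_bvec: assumes "finite I"
  shows "(\<lambda>g mo. \<Sum>i\<in>I. c i * bvec (fst i) (snd i) g mo) = (\<lambda>g mo. if (g,mo) \<in> I then c (g,mo) else 0)"
proof (intro ext)
  fix g mo
  have "(\<Sum>i\<in>I. c i * bvec (fst i) (snd i) g mo) = (\<Sum>i\<in>I. if i = (g,mo) then c i else 0)"
    by (intro sum.cong) (auto simp: bvec_def)
  also have "\<dots> = (if (g,mo) \<in> I then c (g,mo) else 0)"
    using assms by (simp add: sum.delta')
  finally show "(\<Sum>i\<in>I. c i * bvec (fst i) (snd i) g mo) = (if (g,mo) \<in> I then c (g,mo) else 0)" .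
qed

lemma cspan_eq: fixes I :: "(nat \<times> (nat \<times> nat)) set" assumes "finite I"
  shows "cspan_idx I = {v. \<forall>g mo. v g mo \<noteq> 0 \<longrightarrow> (g,mo) \<in> I}"
proof (intro set_eqI iffI)
  fix v assume "v \<in> cspan_idx I"
  then obtain c where "v = (\<lambda>g mo. \<Sum>i\<in>I. c i * bvec (fst i) (snd i) g mo)" by (auto simp: cspan_idx_def)
  then show "v \<in> {v. \<forall>g mo. v g mo \<noteq> 0 \<longrightarrow> (g,mo) \<in> I}" using sum_bvec[OF assms] by auto
next
  fix v :: "nat \<Rightarrow> nat \<times> nat \<Rightarrow> complex" assume v: "v \<in> {v. \<forall>g mo. v g mo \<noteq> 0 \<longrightarrow> (g,mo) \<in> I}"
  have "v = (\<lambda>g mo. \<Sum>i\<in>I. (\<lambda>i. v (fst i) (snd i)) i * bvec (fst i) (snd i) g mo)"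
    unfolding sum_bvec[OF assms] using v by (auto simp: fun_eq_iff)
  then show "v \<in> cspan_idx I" unfolding cspan_idx_def mem_Collect_eq
    by (intro exI[of _ "\<lambda>i. v (fst i) (snd i)"])
qed

lemma indep: assumes "finite I" shows "lin_indep_idx I"
  unfolding lin_indep_idx_def sum_bvec[OF assms] by (auto simp: fun_eq_iff)

theorem mainTheorem8:
  fixes n :: nat
  assumes "n \<ge> 3"
  defines "I \<equiv> {(lam_pow n (- int k), (0::nat, 0::nat)) | k. k \<le> 2 * n - 2 \<and> k \<noteq> n - 1}
               \<union> {(lam_pow n (- (int n - 1)), (0, 1))}"
  shows "invariants n = cspan_idx I
    \<and> finite I \<and> card I = 2 * n - 1 \<and> lin_indep_idx I
    \<and> (\<forall>k. k \<le> 2 * n - 2 \<and> k \<noteq> n - 1 \<longrightarrow>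
           dual_bideg n (lam_pow n (- int k), (0, 0)) = (- real k / real (2 * n), real k / real (2 * n)))
    \<and> dual_bideg n (lam_pow n (- (int n - 1)), (0, 1))
           = (- (real n - 1) / real (2 * n), (real n - 1) / real (2 * n))
    \<and> dual_bideg n ` I = {(- real k / real (2 * n), real k / real (2 * n)) | k. k \<le> 2 * n - 2}
    \<and> inj_on (dual_bideg n) I"
proof -
  have n3: "n \<ge> 3" by fact
  define K where "K = {..2*n-2}"
  define e where "e k = (if k = n-1 then (lam_pow n (- (int n - 1)), (0::nat, 1::nat))
                         else (lam_pow n (- int k), (0, 0)))" for k
  have IeK: "I = e ` K"
    unfolding I_def K_def e_def using n3 by (auto simp: image_iff) 
  have fst_e: "fst (e k) = (if k = 0 then 0 else 2*n - k)" if "k \<in> K" for k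
    using that n3 lam_pow_k[of k n] lam_pow_n1[OF n3] by (auto simp: e_def K_def)
  have de: "dual_bideg n (e k) = (- real k / real (2 * n), real k / real (2 * n))" if "k \<in> K" for k
  proof (cases "k = n-1")
    case True
    then show ?thesis using bideg_n1[OF n3] n3 by (simp add: e_def of_nat_diff)
  next
    case False
    then show ?thesis using bideg_k[OF n3, of k] that by (simp add: e_def K_def)
  qed
  have inje: "inj_on e K"
  proof (rule inj_onI)
    fix a b assume ab: "a \<in> K" "b \<in> K" "e a = e b"
    then have "fst (e a) = fst (e b)" by simp
    then show "a = b" using fst_e[OF ab(1)] fst_e[OF ab(2)] ab(1,2) n3
      by (auto simp: K_def split: if_splits)
  qed
  have fin: "finite I" unfolding IeK K_def by simp
  have card: "card I = 2*n - 1" unfolding IeK using card_image[OF inje] n3 by (simp add: K_def)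
  have IIset: "I = Iset n"
  proof
    show "I \<subseteq> Iset n"
    proof
      fix x assume "x \<in> I"
      then obtain k where k: "k \<in> K" "x = e k" using IeK by auto
      show "x \<in> Iset n"
      proof (cases "k = n-1")
        case True then show ?thesis using k lam_pow_n1[OF n3] by (simp add: e_def Iset_def)
      next
        case False then show ?thesis using k lam_pow_k[of k n] n3 by (auto simp: e_def Iset_def K_def)
      qed
    qed
  next
    show "Iset n \<subseteq> I"
    proof
      fix x assume x: "x \<in> Iset n"
      show "x \<in> I"
      proof (cases "x = (n+1, (0,1))")
        case True
        have "n - 1 \<in> K" by (simp add: K_def)
        then show ?thesis using True lam_pow_n1[OF n3] IeK by (force simp: e_def)
      next
        case False
        then obtain g where g: "x = (g,(0,0))" "g < 2*n" "g \<noteq> 1" "g \<noteq> n+1" using x by (auto simp: Iset_def)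
        define k where "k = (if g = 0 then 0 else 2*n - g)"
        have kK: "k \<in> K" "k \<noteq> n-1" "k < 2*n" using g n3 by (auto simp: k_def K_def)
        have "e k = x" using kK lam_pow_k[of k n] g by (auto simp: e_def k_def)
        then show ?thesis using kK IeK by auto
      qed
    qed
  qed
  have inv: "invariants n = cspan_idx I"
    unfolding cspan_eq[OF fin] using inv_char[OF n3] IIset by auto
  have img: "dual_bideg n ` I = {(- real k / real (2 * n), real k / real (2 * n)) | k. k \<le> 2 * n - 2}"
    unfolding IeK image_image using de by (auto simp: K_def image_iff)
  have injd: "inj_on (dual_bideg n) I"
  proof (rule inj_onI)
    fix x y assume xy: "x \<in> I" "y \<in> I" "dual_bideg n x = dual_bideg n y"
    then obtain a b where ab: "a \<in> K" "b \<in> K" "x = e a" "y = e b" using IeK by auto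
    then have "real a / real (2*n) = real b / real (2*n)" using xy de by simp
    then have "a = b" using n3 by (simp add: divide_simps)
    then show "x = y" using ab by simp
  qed
  show ?thesis using inv fin card indep[OF fin] bideg_k[OF n3] bideg_n1[OF n3] img injd by blast
qed

end
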